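(* Let $(N,X)$ be a dynamical network $N=F\circ T$ as described in the context, with local Lipschitz constants $L_1,\dots,L_n$ and interaction constants $\Lambda_{ij}$, and let $M_N=\Lambda^T\cdot\mathrm{diag}[L_1,\dots,L_n]$, i.e. $(M_N)_{ji}=\Lambda_{ij}L_i$. If $\rho(M_N)<1$, then $(N,X)$ has a globally attracting fixed point, i.e. there is $\tilde x\in X$ with $N^k(y)\to\tilde x$ as $k\to\infty$ for every $y\in X$.
   Context: Let $\mathcal{I}=\{1,\dots,n\}$. For each $i\in\mathcal{I}$ let $(X_i,d)$ be a compact metric space and $T_i:X_i\to X_i$ a map with $L_i=\sup_{x_i\ne y_i}\frac{d(T_i(x_i),T_i(y_i))}{d(x_i,y_i)}<\infty$. Let $X=\prod_{i}X_i$ with the metric $d_{\max}(x,y)=\max_i d(x_i,y_i)$, and $T:X\to X$ the product map $T(x)_i=T_i(x_i)$. A map $F:X\to X$ is an interaction if for every $j\in\mathcal{I}$ there are a nonempty $\mathcal{I}_j\subseteq\mathcal{I}$ and a continuous $F_j:\prod_{i\in\mathcal{I}_j}X_i\to X_j$ with $F(x)_j=F_j(\{x_i\}_{i\in\mathcal{I}_j})$ and constants $\Lambda_{ij}\ge0$ such that $d(F_j(\{x_i\}),F_j(\{y_i\}))\le\sum_{i\in\mathcal{I}_j}\Lambda_{ij}d(x_i,y_i)$ for all arguments; $\Lambda_{ij}=0$ if $i\notin\mathcal{I}_j$, and $\Lambda=(\Lambda_{ij})\in\mathbb{R}^{n\times n}$. The dynamical network is $N=F\circ T:X\to X$. $\rho(A)$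 denotes the spectral radius of a matrix $A$. *)

theory Defs
  imports "HOL-Analysis.Analysis" "Jordan_Normal_Form.Spectral_Radius"
begin

text \<open>Components are indexed by i < n (the paper's 1..n shifted to 0..n-1).
  All component spaces X i are subsets of one ambient metric space 'a, with the
  induced metric.\<close>

text \<open>Lipschitz constant of T on S: the supremum of the difference quotients
  (with the convention 0 when S has fewer than two points).\<close>
definition lip_const :: "'a::metric_space set \<Rightarrow> ('a \<Rightarrow> 'a) \<Rightarrow> real" where
  "lip_const S T = Sup (insert 0 {dist (T x) (T y) / dist x y | x y. x \<in> S \<and> y \<in> S \<and> x \<noteq> y})"

definition dmax :: "nat \<Rightarrow> (nat \<Rightarrow> 'a::metric_space) \<Rightarrow> (nat \<Rightarrow> 'a) \<Rightarrow> real" where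
  "dmax n x y = Max (insert 0 ((\<lambda>i. dist (x i) (y i)) ` {..<n}))"

definition prod_map :: "nat \<Rightarrow> (nat \<Rightarrow> 'a \<Rightarrow> 'a) \<Rightarrow> (nat \<Rightarrow> 'a) \<Rightarrow> (nat \<Rightarrow> 'a)" where
  "prod_map n T x = restrict (\<lambda>i. T i (x i)) {..<n}"

definition network :: "nat \<Rightarrow> (nat \<Rightarrow> (nat \<Rightarrow> 'a) \<Rightarrow> 'a) \<Rightarrow> (nat \<Rightarrow> 'a \<Rightarrow> 'a)
    \<Rightarrow> (nat \<Rightarrow> 'a) \<Rightarrow> (nat \<Rightarrow> 'a)" where
  "network n F T x = restrict (\<lambda>j. F j (prod_map n T x)) {..<n}"

definition interaction :: "nat \<Rightarrow> (nat \<Rightarrow> 'a::metric_space set) \<Rightarrow> (nat \<Rightarrow> (nat \<Rightarrow> 'a) \<Rightarrow> 'a)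
    \<Rightarrow> (nat \<Rightarrow> nat set) \<Rightarrow> (nat \<Rightarrow> nat \<Rightarrow> real) \<Rightarrow> bool" where
  "interaction n X F I Lam \<longleftrightarrow>
     (\<forall>j<n. I j \<noteq> {} \<and> I j \<subseteq> {..<n}
        \<and> (\<forall>x\<in>PiE {..<n} X. F j x \<in> X j)
        \<and> (\<forall>x\<in>PiE {..<n} X. \<forall>y\<in>PiE {..<n} X. (\<forall>i\<in>I j. x i = y i) \<longrightarrow> F j x = F j y)
        \<and> continuous_on (PiE {..<n} X) (F j)
        \<and> (\<forall>x\<in>PiE {..<n} X. \<forall>y\<in>PiE {..<n} X.
              dist (F j x) (F j y) \<le> (\<Sum>i\<in>I j. Lam i j * dist (x i) (y i)))
        \<and> (\<forall>i<n. Lam i j \<ge> 0 \<and> (i \<notin> I j \<longrightarrow> Lam i j = 0)))"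

definition network_matrix :: "nat \<Rightarrow> (nat \<Rightarrow> nat \<Rightarrow> real) \<Rightarrow> (nat \<Rightarrow> real) \<Rightarrow> complex mat" where
  "network_matrix n Lam L = mat n n (\<lambda>(j, i). complex_of_real (Lam i j * L i))"

end

theory Submission
  imports Defs
begin

lemma lip_nonneg:
  assumes "bdd_above {dist (T x) (T y) / dist x y | x y. x \<in> S \<and> y \<in> S \<and> x \<noteq> y}"
  shows "0 \<le> lip_const S T"
  unfolding lip_const_def using assms by (intro cSup_upper) auto

lemma lip_bound:
  assumes "bdd_above {dist (T x) (T y) / dist x y | x y. x \<in> S \<and> y \<in> S \<and> x \<noteq> y}"
    and "x \<in> S" "y \<in> S"
  shows "dist (T x) (T y) \<le> lip_const S T * dist x y"
proof (cases "x = y")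
  case True then show ?thesis using lip_nonneg[OF assms(1)] by simp
next
  case False
  have "dist (T x) (T y) / dist x y \<le> lip_const S T"
    unfolding lip_const_def using assms False by (intro cSup_upper) auto
  then show ?thesis using False by (simp add: divide_le_eq)
qed

fun Pw :: "nat \<Rightarrow> (nat \<Rightarrow> nat \<Rightarrow> real) \<Rightarrow> nat \<Rightarrow> nat \<Rightarrow> nat \<Rightarrow> real" where
  "Pw n m 0 j i = (if j = i then 1 else 0)"
| "Pw n m (Suc k) j i = (\<Sum>l<n. Pw n m k j l * m l i)"

lemma Pw_nonneg: "(\<And>j i. 0 \<le> m j i) \<Longrightarrow> 0 \<le> Pw n m k j i"
  by (induction k arbitrary: j i) (auto intro!: sum_nonneg)

lemma Pw_mat:
  assumes "j < n" "i < n" "r \<noteq> 0"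
  shows "(mat n n (\<lambda>(j,i). complex_of_real (m j i / r)) ^\<^sub>m k) $$ (j,i) = complex_of_real (Pw n m k j i / r^k)"
  using assms(1,2)
proof (induction k arbitrary: j i)
  case 0 then show ?case by simp
next
  case (Suc k)
  have "(mat n n (\<lambda>(j,i). complex_of_real (m j i / r)) ^\<^sub>m Suc k) $$ (j,i)
     = (\<Sum>l<n. complex_of_real (Pw n m k j l / r^k) * complex_of_real (m l i / r))"
    using Suc by (simp add: scalar_prod_def lessThan_atLeast0 col_def row_def)
  also have "\<dots> = complex_of_real (Pw n m (Suc k) j i / r^Suc k)"
    by (simp add: sum_divide_distrib mult.commute)
  finally show ?case .
qed

lemma rho_scale:
  fixes m :: "nat \<Rightarrow> nat \<Rightarrow> real"
  assumes n: "n > 0" and r: "r > 0"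
    and rho: "spectral_radius (mat n n (\<lambda>(j,i). complex_of_real (m j i))) < r"
  shows "spectral_radius (mat n n (\<lambda>(j,i). complex_of_real (m j i / r))) < 1"
proof -
  define A where "A = mat n n (\<lambda>(j,i). complex_of_real (m j i / r))"
  define M where "M = mat n n (\<lambda>(j,i). complex_of_real (m j i))"
  have A: "A \<in> carrier_mat n n" and M: "M \<in> carrier_mat n n" unfolding A_def M_def by auto
  from spectral_radius_mem_max(1)[OF A n] obtain mu where mu: "mu \<in> spectrum A"
    and eq: "spectral_radius A = norm mu" by auto
  from mu obtain v where ev: "eigenvector A v mu" unfolding spectrum_def eigenvalue_def by auto
  have v: "v \<in> carrier_vec n" "v \<noteq> 0\<^sub>v n" "A *\<^sub>v v = mu \<cdot>\<^sub>v v"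
    using ev A unfolding eigenvector_def by auto
  have "M *\<^sub>v v = (complex_of_real r * mu) \<cdot>\<^sub>v v"
  proof (rule eq_vecI)
    fix j assume j: "j < dim_vec ((complex_of_real r * mu) \<cdot>\<^sub>v v)"
    then have jn: "j < n" using v by auto
    have "(M *\<^sub>v v) $ j = (\<Sum>i<n. complex_of_real (m j i) * v $ i)"
      using jn v unfolding M_def by (simp add: scalar_prod_def lessThan_atLeast0 row_def)
    also have "\<dots> = complex_of_real r * (\<Sum>i<n. complex_of_real (m j i / r) * v $ i)"
      using r by (simp add: sum_distrib_left field_simps)
    also have "(\<Sum>i<n. complex_of_real (m j i / r) * v $ i) = (A *\<^sub>v v) $ j"
      using jn v(1) unfolding A_def by (simp add: scalar_prod_def lessThan_atLeast0 row_def)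
    also have "\<dots> = (mu \<cdot>\<^sub>v v) $ j" by (simp only: v(3))
    also have "\<dots> = mu * v $ j" using v jn by simp
    finally show "(M *\<^sub>v v) $ j = ((complex_of_real r * mu) \<cdot>\<^sub>v v) $ j" using jn v by simp
  qed (use v M in auto)
  then have "eigenvector M v (complex_of_real r * mu)" using v M unfolding eigenvector_def by auto
  then have "complex_of_real r * mu \<in> spectrum M" unfolding spectrum_def eigenvalue_def by auto
  from spectral_radius_mem_max(2)[OF M n] this have "norm (complex_of_real r * mu) \<le> spectral_radius M"
    by auto
  then have h: "r * norm mu \<le> spectral_radius M" using r by (simp add: norm_mult)
  have "r * norm mu < r * 1" using h rho unfolding M_def by linarith
  then have "norm mu < 1" using r by (simp only: mult_less_cancel_left_pos)
  then show ?thesis using eq unfolding A_def by simp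
qed

theorem theorem7:
  fixes n :: nat
    and X :: "nat \<Rightarrow> 'a::metric_space set"
    and T :: "nat \<Rightarrow> 'a \<Rightarrow> 'a"
    and F :: "nat \<Rightarrow> (nat \<Rightarrow> 'a) \<Rightarrow> 'a"
    and I :: "nat \<Rightarrow> nat set"
    and Lam :: "nat \<Rightarrow> nat \<Rightarrow> real"
  assumes compact: "\<And>i. i < n \<Longrightarrow> compact (X i)"
    and nonempty: "\<And>i. i < n \<Longrightarrow> X i \<noteq> {}"
    and T_maps: "\<And>i. i < n \<Longrightarrow> T i ` X i \<subseteq> X i"
    and T_lip_finite: "\<And>i. i < n \<Longrightarrow>
          bdd_above {dist (T i x) (T i y) / dist x y | x y. x \<in> X i \<and> y \<in> X i \<and> x \<noteq> y}"
    and F_int: "interaction n X F I Lam"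
    and rho: "spectral_radius (network_matrix n Lam (\<lambda>i. lip_const (X i) (T i))) < 1"
  shows "\<exists>xt \<in> PiE {..<n} X. \<forall>y \<in> PiE {..<n} X.
           (\<lambda>k. dmax n ((network n F T ^^ k) y) xt) \<longlonglongrightarrow> 0"
proof (cases "n = 0")
  case True
  have "(\<lambda>k. dmax n ((network n F T ^^ k) y) (\<lambda>_. undefined)) = (\<lambda>k. 0)" for y
    unfolding dmax_def True by simp
  then show ?thesis using True by (intro bexI[of _ "\<lambda>_. undefined"]) auto
next
  case False
  then have n: "n > 0" by simp
  define L where "L i = lip_const (X i) (T i)" for i
  define m where "m j i = (if j < n \<and> i < n then Lam i j * L i else 0)" for j i
  define N where "N = network n F T"
  define PI where "PI = PiE {..<n} X"
  have L0: "0 \<le> L i" if "i < n" for i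
    unfolding L_def using lip_nonneg[OF T_lip_finite[OF that]] .
  have Lb: "dist (T i a) (T i b) \<le> L i * dist a b" if "i < n" "a \<in> X i" "b \<in> X i" for i a b
    unfolding L_def using lip_bound[OF T_lip_finite[OF that(1)] that(2,3)] .
  have Fall: "\<forall>j<n. I j \<noteq> {} \<and> I j \<subseteq> {..<n}
        \<and> (\<forall>x\<in>PiE {..<n} X. F j x \<in> X j)
        \<and> (\<forall>x\<in>PiE {..<n} X. \<forall>y\<in>PiE {..<n} X. (\<forall>i\<in>I j. x i = y i) \<longrightarrow> F j x = F j y)
        \<and> continuous_on (PiE {..<n} X) (F j)
        \<and> (\<forall>x\<in>PiE {..<n} X. \<forall>y\<in>PiE {..<n} X.
              dist (F j x) (F j y) \<le> (\<Sum>i\<in>I j. Lam i j * dist (x i) (y i)))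
        \<and> (\<forall>i<n. Lam i j \<ge> 0 \<and> (i \<notin> I j \<longrightarrow> Lam i j = 0))"
    using F_int unfolding interaction_def .
  have FI: "I j \<subseteq> {..<n}" if "j < n" for j
    using Fall[rule_format, OF that] by (elim conjE)
  have FX: "F j x \<in> X j" if "j < n" "x \<in> PI" for j x
    using Fall[rule_format, OF that(1)] that(2) unfolding PI_def by (elim conjE) (erule bspec)
  have Fd: "dist (F j x) (F j y) \<le> (\<Sum>i\<in>I j. Lam i j * dist (x i) (y i))"
    if "j < n" "x \<in> PI" "y \<in> PI" for j x y
    using Fall[rule_format, OF that(1)] that(2,3) unfolding PI_def by (elim conjE) blast
  have FL: "Lam i j \<ge> 0" "i \<notin> I j \<Longrightarrow> Lam i j = 0" if "j < n" "i < n" for i j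
    using Fall[rule_format, OF that(1)] that(2) by (elim conjE; blast)+
  have m0: "0 \<le> m j i" for j i
    using FL(1)[of j i] L0[of i] unfolding m_def by auto
  have Mdef: "network_matrix n Lam (\<lambda>i. lip_const (X i) (T i)) = mat n n (\<lambda>(j,i). complex_of_real (m j i))"
    unfolding network_matrix_def m_def L_def by (rule eq_matI) auto
  have pm: "prod_map n T x \<in> PI" if "x \<in> PI" for x
      using that T_maps unfolding PI_def prod_map_def by (auto simp: PiE_iff)
  have Nmap: "N x \<in> PI" if "x \<in> PI" for x
  proof -
    have "prod_map n T x \<in> PI" using pm[OF that] .
    then show ?thesis using FX unfolding N_def network_def PI_def by (auto simp: PiE_iff)
  qed
  have Nkmap: "(N ^^ k) x \<in> PI" if "x \<in> PI" for x k
    using that by (induction k) (auto intro: Nmap)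
  have step: "dist (N x j) (N y j) \<le> (\<Sum>i<n. m j i * dist (x i) (y i))"
    if x: "x \<in> PI" and y: "y \<in> PI" and j: "j < n" for x y j
  proof -
    have px: "prod_map n T x \<in> PI" and py: "prod_map n T y \<in> PI"
      using pm x y by auto
    have "dist (N x j) (N y j) = dist (F j (prod_map n T x)) (F j (prod_map n T y))"
      using j unfolding N_def network_def by simp
    also have "\<dots> \<le> (\<Sum>i\<in>I j. Lam i j * dist (prod_map n T x i) (prod_map n T y i))"
      by (rule Fd[OF j px py])
    also have "\<dots> \<le> (\<Sum>i\<in>I j. m j i * dist (x i) (y i))"
    proof (rule sum_mono)
      fix i assume i: "i \<in> I j"
      then have iN: "i < n" using FI[OF j] by auto
      have xi: "x i \<in> X i" and yi: "y i \<in> X i" using x y iN unfolding PI_def by auto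
      have "Lam i j * dist (prod_map n T x i) (prod_map n T y i) = Lam i j * dist (T i (x i)) (T i (y i))"
        using iN unfolding prod_map_def by simp
      also have "\<dots> \<le> Lam i j * (L i * dist (x i) (y i))"
        by (rule mult_left_mono[OF Lb[OF iN xi yi] FL(1)[OF j iN]])
      also have "\<dots> = m j i * dist (x i) (y i)" using iN j unfolding m_def by simp
      finally show "Lam i j * dist (prod_map n T x i) (prod_map n T y i) \<le> m j i * dist (x i) (y i)" .
    qed
    also have "\<dots> = (\<Sum>i<n. m j i * dist (x i) (y i))"
    proof (rule sum.mono_neutral_left)
      show "\<forall>i\<in>{..<n} - I j. m j i * dist (x i) (y i) = 0"
        using FL(2)[OF j] unfolding m_def by auto
    qed (use FI[OF j] in auto)
    finally show ?thesis .
  qed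
  have iter: "dist ((N ^^ k) x j) ((N ^^ k) y j) \<le> (\<Sum>i<n. Pw n m k j i * dist (x i) (y i))"
    if "x \<in> PI" "y \<in> PI" "j < n" for k x y j
    using that
  proof (induction k arbitrary: x y)
    case 0
    have "(\<Sum>i<n. Pw n m 0 j i * dist (x i) (y i)) = dist (x j) (y j)"
    proof -
      have "(\<Sum>i<n. Pw n m 0 j i * dist (x i) (y i)) = (\<Sum>i<n. if j = i then dist (x i) (y i) else 0)"
        by (rule sum.cong) auto
      also have "\<dots> = dist (x j) (y j)" using 0 by (simp add: sum.delta)
      finally show ?thesis .
    qed
    then show ?case by simp
  next
    case (Suc k)
    have "dist ((N ^^ Suc k) x j) ((N ^^ Suc k) y j) = dist ((N ^^ k) (N x) j) ((N ^^ k) (N y) j)"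
      by (simp add: funpow_Suc_right del: funpow.simps)
    also have "\<dots> \<le> (\<Sum>l<n. Pw n m k j l * dist (N x l) (N y l))"
      using Suc.IH[OF Nmap[OF Suc.prems(1)] Nmap[OF Suc.prems(2)] Suc.prems(3)] .
    also have "\<dots> \<le> (\<Sum>l<n. Pw n m k j l * (\<Sum>i<n. m l i * dist (x i) (y i)))"
      by (intro sum_mono mult_left_mono step Suc.prems Pw_nonneg m0) auto
    also have "\<dots> = (\<Sum>i<n. Pw n m (Suc k) j i * dist (x i) (y i))"
    proof -
      have "(\<Sum>l<n. Pw n m k j l * (\<Sum>i<n. m l i * dist (x i) (y i)))
          = (\<Sum>l<n. \<Sum>i<n. Pw n m k j l * m l i * dist (x i) (y i))"
        by (simp add: sum_distrib_left mult.assoc)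
      also have "\<dots> = (\<Sum>i<n. \<Sum>l<n. Pw n m k j l * m l i * dist (x i) (y i))"
        by (rule sum.swap)
      also have "\<dots> = (\<Sum>i<n. Pw n m (Suc k) j i * dist (x i) (y i))"
        by (simp add: sum_distrib_right)
      finally show ?thesis .
    qed
    finally show ?case .
  qed
  define r where "r = (max (spectral_radius (network_matrix n Lam (\<lambda>i. lip_const (X i) (T i)))) 0 + 1) / 2"
  have r0: "0 < r" and r1: "r < 1"
    and rr: "spectral_radius (mat n n (\<lambda>(j,i). complex_of_real (m j i))) < r"
    using rho unfolding r_def Mdef by auto
  define A where "A = mat n n (\<lambda>(j,i). complex_of_real (m j i / r))"
  have Acar: "A \<in> carrier_mat n n" unfolding A_def by auto
  have rA: "spectral_radius A < 1" unfolding A_def by (rule rho_scale[OF n r0 rr])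
  obtain c where c: "\<And>k. norm_bound (A ^\<^sub>m k) c"
    using spectral_radius_jnf_norm_bound_less_1_upper_triangular[OF Acar rA] by auto
  have Pwb: "Pw n m k j i \<le> c * r ^ k" if "j < n" "i < n" for k j i
  proof -
    have "norm ((A ^\<^sub>m k) $$ (j,i)) \<le> c"
      using c[of k] that Acar unfolding norm_bound_def by auto
    moreover have e: "(A ^\<^sub>m k) $$ (j,i) = complex_of_real (Pw n m k j i / r^k)"
      unfolding A_def by (rule Pw_mat[OF that]) (use r0 in simp)
    ultimately have "norm (complex_of_real (Pw n m k j i / r^k)) \<le> c" by (simp only: e)
    then have "\<bar>Pw n m k j i / r ^ k\<bar> \<le> c" by (simp only: norm_of_real)
    then have "Pw n m k j i / r ^ k \<le> c" by (meson abs_ge_self order_trans)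
    then show ?thesis using r0 by (simp add: divide_le_eq mult.commute)
  qed
  have c0: "0 \<le> c * r ^ k" for k
    using Pwb[OF n n, of k] Pw_nonneg[of m n k 0 0] m0 by (meson order_trans)
  have "compact (\<Union>j<n. X j)" using compact by (intro compact_UN) auto
  then have "bounded (\<Union>j<n. X j)" by (rule compact_imp_bounded)
  from this[unfolded bounded_any_center[of _ undefined]] obtain e
    where e0: "\<forall>z\<in>(\<Union>j<n. X j). dist undefined z \<le> e" by (elim exE)
  have e: "dist undefined z \<le> e" if "i < n" "z \<in> X i" for i z
    using e0 that by blast
  define B where "B = 2 * e"
  have dB: "dist a b \<le> B" if "i < n" "a \<in> X i" "b \<in> X i" for i a b
  proof -
    have "dist a b \<le> dist undefined a + dist undefined b" by (rule dist_triangle3)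
    also have "\<dots> \<le> B" using e[OF that(1,2)] e[OF that(1,3)] unfolding B_def by linarith
    finally show ?thesis .
  qed
  define K where "K = real n * c * B"
  have decay: "dist ((N ^^ k) x j) ((N ^^ k) y j) \<le> K * r ^ k"
    if x: "x \<in> PI" and y: "y \<in> PI" and j: "j < n" for k x y j
  proof -
    have "dist ((N ^^ k) x j) ((N ^^ k) y j) \<le> (\<Sum>i<n. Pw n m k j i * dist (x i) (y i))"
      by (rule iter[OF x y j])
    also have "\<dots> \<le> (\<Sum>i<n. (c * r ^ k) * B)"
    proof (rule sum_mono)
      fix i assume "i \<in> {..<n}"
      then have i: "i < n" by simp
      have "x i \<in> X i" "y i \<in> X i" using x y i unfolding PI_def by auto
      then show "Pw n m k j i * dist (x i) (y i) \<le> c * r ^ k * B"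
        by (intro mult_mono Pwb[OF j i] dB[OF i] Pw_nonneg m0 c0) auto
    qed
    also have "\<dots> = K * r ^ k" unfolding K_def by simp
    finally show ?thesis .
  qed
  have K0: "0 \<le> K"
  proof -
    obtain a where "a \<in> X 0" using nonempty[OF n] by auto
    then have "0 \<le> B" using dB[OF n, of a a] by simp
    moreover have "0 \<le> c" using c0[of 0] by simp
    ultimately show ?thesis unfolding K_def by simp
  qed
  have Kr: "(\<lambda>k. K * r ^ k) \<longlonglongrightarrow> 0"
    using tendsto_mult_right_zero[OF LIMSEQ_power_zero[of r]] r0 r1 by auto
  have "PiE {..<n} X \<noteq> {}" unfolding PiE_eq_empty_iff using nonempty by blast
  then obtain y0 where y0: "y0 \<in> PI" unfolding PI_def by blast
  define s where "s k = (N ^^ k) y0" for k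
  have conv: "\<exists>l\<in>X j. (\<lambda>k. s k j) \<longlonglongrightarrow> l" if j: "j < n" for j
  proof -
    have inX: "s k j \<in> X j" for k using Nkmap[OF y0, of k] j unfolding s_def PI_def by auto
    have "Cauchy (\<lambda>k. s k j)"
    proof (rule metric_CauchyI)
      fix eps :: real assume eps: "eps > 0"
      have "eventually (\<lambda>k. K * r ^ k < eps) sequentially"
        by (rule order_tendstoD(2)[OF Kr eps])
      then obtain M where M: "K * r ^ M < eps" by (auto simp: eventually_sequentially)
      show "\<exists>M. \<forall>p\<ge>M. \<forall>q\<ge>M. dist (s p j) (s q j) < eps"
      proof (intro exI allI impI)
        fix p q assume p: "p \<ge> M" and q: "q \<ge> M"
        define k where "k = min p q"
        have sp: "s p = (N ^^ k) ((N ^^ (p - k)) y0)"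
        proof -
          have "p = k + (p - k)" unfolding k_def by simp
          then have "N ^^ p = (N ^^ k) \<circ> (N ^^ (p - k))" by (metis funpow_add)
          then show ?thesis unfolding s_def by simp
        qed
        have sq: "s q = (N ^^ k) ((N ^^ (q - k)) y0)"
        proof -
          have "q = k + (q - k)" unfolding k_def by simp
          then have "N ^^ q = (N ^^ k) \<circ> (N ^^ (q - k))" by (metis funpow_add)
          then show ?thesis unfolding s_def by simp
        qed
        have "dist (s p j) (s q j) \<le> K * r ^ k"
          unfolding sp sq by (rule decay[OF Nkmap[OF y0] Nkmap[OF y0] j])
        also have "\<dots> \<le> K * r ^ M"
          using K0 r0 r1 p q unfolding k_def by (intro mult_left_mono power_decreasing) auto
        finally show "dist (s p j) (s q j) < eps" using M by simp
      qed
    qed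
    moreover have "complete (X j)" using compact[OF j] by (rule compact_imp_complete)
    then have "(\<forall>k. s k j \<in> X j) \<and> Cauchy (\<lambda>k. s k j) \<longrightarrow> (\<exists>l\<in>X j. (\<lambda>k. s k j) \<longlonglongrightarrow> l)"
      unfolding complete_def by (rule spec[where x="\<lambda>k. s k j"])
    ultimately show ?thesis using inX by blast
  qed
  define xt where "xt = restrict (\<lambda>j. SOME l. l \<in> X j \<and> (\<lambda>k. s k j) \<longlonglongrightarrow> l) {..<n}"
  have xt: "xt j \<in> X j \<and> (\<lambda>k. s k j) \<longlonglongrightarrow> xt j" if "j < n" for j
    using someI_ex[OF conv[OF that, unfolded Bex_def]] that unfolding xt_def by simp
  have xtPI: "xt \<in> PI" unfolding PI_def using xt unfolding xt_def by (auto simp: PiE_iff)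
  show ?thesis unfolding PI_def[symmetric] N_def[symmetric]
  proof (intro bexI[OF _ xtPI] ballI)
    fix y assume y: "y \<in> PI"
    define g where "g k = (\<Sum>j<n. K * r ^ k + dist (s k j) (xt j))" for k
    have g: "g \<longlonglongrightarrow> 0" unfolding g_def
    proof (rule tendsto_null_sum)
      fix j assume "j \<in> {..<n}"
      then have "(\<lambda>k. dist (s k j) (xt j)) \<longlonglongrightarrow> 0"
        using xt[of j] by (simp add: tendsto_dist_iff[symmetric])
      then show "(\<lambda>k. K * r ^ k + dist (s k j) (xt j)) \<longlonglongrightarrow> 0"
        using tendsto_add_zero[OF Kr] by blast
    qed
    have bnd: "0 \<le> dmax n ((N ^^ k) y) xt \<and> dmax n ((N ^^ k) y) xt \<le> g k" for k
    proof
      show "0 \<le> dmax n ((N ^^ k) y) xt" unfolding dmax_def by (rule Max_ge) auto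
      have each: "dist ((N ^^ k) y j) (xt j) \<le> K * r ^ k + dist (s k j) (xt j)" if "j < n" for j
      proof -
        have "dist ((N ^^ k) y j) (xt j) \<le> dist ((N ^^ k) y j) (s k j) + dist (s k j) (xt j)"
          by (rule dist_triangle)
        also have "dist ((N ^^ k) y j) (s k j) \<le> K * r ^ k"
          unfolding s_def by (rule decay[OF y y0 that])
        finally show ?thesis by simp
      qed
      have nn: "0 \<le> K * r ^ k + dist (s k j) (xt j)" for j using K0 r0 by simp
      show "dmax n ((N ^^ k) y) xt \<le> g k" unfolding dmax_def g_def
      proof (subst Max_le_iff, simp, simp, intro ballI)
        fix a assume "a \<in> insert 0 ((\<lambda>i. dist ((N ^^ k) y i) (xt i)) ` {..<n})"
        then consider "a = 0" | j where "j < n" "a = dist ((N ^^ k) y j) (xt j)" by auto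
        then show "a \<le> (\<Sum>j<n. K * r ^ k + dist (s k j) (xt j))"
        proof cases
          case 1 then show ?thesis using sum_nonneg[of "{..<n}" "\<lambda>j. K * r ^ k + dist (s k j) (xt j)"] nn by simp
        next
          case 2
          have "a \<le> K * r ^ k + dist (s k j) (xt j)" using each[OF 2(1)] 2(2) by simp
          also have "\<dots> \<le> (\<Sum>j<n. K * r ^ k + dist (s k j) (xt j))"
            by (rule member_le_sum) (use 2 nn in auto)
          finally show ?thesis .
        qed
      qed
    qed
    show "(\<lambda>k. dmax n ((N ^^ k) y) xt) \<longlonglongrightarrow> 0"
      by (rule tendsto_sandwich[of "\<lambda>_. 0" _ _ g]) (use bnd g in auto)
  qed
qed
end
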